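(* Let $Y$ and $Z$ be sofic shifts and let $(G,L_G)$ and $(H,L_H)$ be right-resolving labeled graphs presenting $Y$ and $Z$, respectively. Assume that there are conjugacies $\psi : Y \to Z$ and $\phi : X_G \to X_H$ such that $L_H\circ\phi=\psi\circ L_G$. Then there is a conjugacy $\phi'' : X_{G''} \to X_{H''}$ such that $L_{H''}\circ\phi''=\psi\circ L_{G''}$.
   Context: A labeled graph $(H,L_H)$: finite directed graph (vertices $V_H$, edges $E_H$, source/terminal maps $s_H,t_H$) without sinks or sources, labeling $L_H:E_H\to A$, edge shift $X_H$; $L_H$ applied coordinatewise; it presents $L_H(X_H)$. Right-resolving: distinct edges with the same source have distinct labels. Conjugacy: shift-commuting homeomorphism. Subset construction $(H'',L_{H''})$: vertices are non-empty subsets of $V_H$; for vertices $F,F'$ and a symbol $a$ there is an edge from $F$ to $F'$ labeled $a$ when $F\subseteq\{s_H(e): L_H(e)=a\}$ and $F'=\{t_H(e): s_H(e)\in F, L_H(e)=a\}$; the graph is then trimmed by repeatedly removing sinks and sources. $(G'',L_{G''})$ is defined likewise from $(G,L_G)$. *)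

theory Defs
  imports "HOL-Analysis.Analysis"
begin

definition shift :: "(int \<Rightarrow> 'a) \<Rightarrow> int \<Rightarrow> 'a" where
  "shift x = (\<lambda>i. x (i + 1))"

definition full_shift_top :: "(int \<Rightarrow> 'a) topology" where
  "full_shift_top = product_topology (\<lambda>_. discrete_topology UNIV) UNIV"

definition conjugacy ::
  "(int \<Rightarrow> 'a) set \<Rightarrow> (int \<Rightarrow> 'b) set \<Rightarrow> ((int \<Rightarrow> 'a) \<Rightarrow> (int \<Rightarrow> 'b)) \<Rightarrow> bool" where
  "conjugacy X Y f \<longleftrightarrow>
     homeomorphic_map (subtopology full_shift_top X) (subtopology full_shift_top Y) f \<and>
     (\<forall>x\<in>X. f (shift x) = shift (f x))"

definition edge_shift :: "'e set \<Rightarrow> ('e \<Rightarrow> 'v) \<Rightarrow> ('e \<Rightarrow> 'v) \<Rightarrow> (int \<Rightarrow> 'e) set" where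
  "edge_shift E s t = {x. \<forall>i. x i \<in> E \<and> t (x i) = s (x (i + 1))}"

definition label_map :: "('e \<Rightarrow> 'a) \<Rightarrow> (int \<Rightarrow> 'e) \<Rightarrow> int \<Rightarrow> 'a" where
  "label_map L x = (\<lambda>i. L (x i))"

definition fin_graph_no_sink_source ::
  "'v set \<Rightarrow> 'e set \<Rightarrow> ('e \<Rightarrow> 'v) \<Rightarrow> ('e \<Rightarrow> 'v) \<Rightarrow> bool" where
  "fin_graph_no_sink_source V E s t \<longleftrightarrow>
     finite V \<and> finite E \<and> (\<forall>e\<in>E. s e \<in> V \<and> t e \<in> V) \<and>
     (\<forall>v\<in>V. \<exists>e\<in>E. s e = v) \<and> (\<forall>v\<in>V. \<exists>e\<in>E. t e = v)"

definition right_resolving :: "'e set \<Rightarrow> ('e \<Rightarrow> 'v) \<Rightarrow> ('e \<Rightarrow> 'a) \<Rightarrow> bool" where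
  "right_resolving E s L \<longleftrightarrow>
     (\<forall>e\<in>E. \<forall>e'\<in>E. s e = s e' \<and> L e = L e' \<longrightarrow> e = e')"

text \<open>Edges of the subset graph are triples (F, a, F'): source F, label a, terminal F'.\<close>
definition sc_src :: "'v set \<times> 'a \<times> 'v set \<Rightarrow> 'v set" where
  "sc_src d = fst d"
definition sc_trg :: "'v set \<times> 'a \<times> 'v set \<Rightarrow> 'v set" where
  "sc_trg d = snd (snd d)"
definition sc_label :: "'v set \<times> 'a \<times> 'v set \<Rightarrow> 'a" where
  "sc_label d = fst (snd d)"

definition sc_vertices0 :: "'v set \<Rightarrow> 'v set set" where
  "sc_vertices0 V = Pow V - {{}}"

definition sc_edges0 ::
  "'v set \<Rightarrow> 'e set \<Rightarrow> ('e \<Rightarrow> 'v) \<Rightarrow> ('e \<Rightarrow> 'v) \<Rightarrow> ('e \<Rightarrow> 'a) \<Rightarrow> ('v set \<times> 'a \<times> 'v set) set" where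
  "sc_edges0 V E s t L =
     {(F, a, F'). F \<in> sc_vertices0 V \<and> F' \<in> sc_vertices0 V \<and>
        F \<subseteq> {s e | e. e \<in> E \<and> L e = a} \<and>
        F' = {t e | e. e \<in> E \<and> s e \<in> F \<and> L e = a}}"

definition trim_step ::
  "('d \<Rightarrow> 'w) \<Rightarrow> ('d \<Rightarrow> 'w) \<Rightarrow> 'w set \<times> 'd set \<Rightarrow> 'w set \<times> 'd set" where
  "trim_step src trg WD =
     (let W = fst WD; D = snd WD;
          W' = {v \<in> W. (\<exists>d\<in>D. src d = v) \<and> (\<exists>d\<in>D. trg d = v)}
      in (W', {d \<in> D. src d \<in> W' \<and> trg d \<in> W'}))"

text \<open>Result of repeatedly removing sinks and sources (the decreasing sequence of
  iterates is eventually constant for finite graphs; its limit is the intersection).\<close>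
definition trim_vertices :: "('d \<Rightarrow> 'w) \<Rightarrow> ('d \<Rightarrow> 'w) \<Rightarrow> 'w set \<times> 'd set \<Rightarrow> 'w set" where
  "trim_vertices src trg WD = (\<Inter>n. fst ((trim_step src trg ^^ n) WD))"
definition trim_edges :: "('d \<Rightarrow> 'w) \<Rightarrow> ('d \<Rightarrow> 'w) \<Rightarrow> 'w set \<times> 'd set \<Rightarrow> 'd set" where
  "trim_edges src trg WD = (\<Inter>n. snd ((trim_step src trg ^^ n) WD))"

definition sc_vertices ::
  "'v set \<Rightarrow> 'e set \<Rightarrow> ('e \<Rightarrow> 'v) \<Rightarrow> ('e \<Rightarrow> 'v) \<Rightarrow> ('e \<Rightarrow> 'a) \<Rightarrow> 'v set set" where
  "sc_vertices V E s t L = trim_vertices sc_src sc_trg (sc_vertices0 V, sc_edges0 V E s t L)"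
definition sc_edges ::
  "'v set \<Rightarrow> 'e set \<Rightarrow> ('e \<Rightarrow> 'v) \<Rightarrow> ('e \<Rightarrow> 'v) \<Rightarrow> ('e \<Rightarrow> 'a) \<Rightarrow> ('v set \<times> 'a \<times> 'v set) set" where
  "sc_edges V E s t L = trim_edges sc_src sc_trg (sc_vertices0 V, sc_edges0 V E s t L)"

end

theory Submission
  imports Defs
begin

definition agree :: "int \<Rightarrow> (int \<Rightarrow> 'a) \<Rightarrow> (int \<Rightarrow> 'a) \<Rightarrow> bool" where
  "agree m x y \<longleftrightarrow> (\<forall>j. -m \<le> j \<and> j \<le> m \<longrightarrow> y j = x j)"

lemma agree_at: "agree m x y \<Longrightarrow> \<bar>i\<bar> \<le> m \<Longrightarrow> y i = x i"
  unfolding agree_def by (metis abs_le_iff minus_le_iff)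

lemma agree_mono: "agree m x y \<Longrightarrow> m' \<le> m \<Longrightarrow> agree m' x y"
  unfolding agree_def by auto

lemma topspace_fst[simp]: "topspace full_shift_top = UNIV"
  by (simp add: full_shift_top_def)

lemma cyl_open: "openin full_shift_top {y. agree m x y}"
proof -
  have "openin (product_topology (\<lambda>_. discrete_topology UNIV) UNIV) {y. agree m x y}"
    unfolding openin_product_topology_alt
  proof (intro ballI)
    fix z assume z: "z \<in> {y. agree m x y}"
    define U where "U = (\<lambda>j::int. if -m \<le> j \<and> j \<le> m then {x j} else UNIV)"
    have "{i. U i \<noteq> UNIV} \<subseteq> {-m..m}" by (auto simp: U_def)
    hence fin: "finite {i. U i \<noteq> UNIV}" by (rule finite_subset) auto
    have "z \<in> Pi\<^sub>E UNIV U" using z by (auto simp: U_def agree_def)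
    moreover have "Pi\<^sub>E UNIV U \<subseteq> {y. agree m x y}"
    proof
      fix y assume "y \<in> Pi\<^sub>E UNIV U"
      hence yU: "y j \<in> U j" for j by (auto simp: PiE_iff)
      have "y j = x j" if "-m \<le> j \<and> j \<le> m" for j
        using yU[of j] that by (simp add: U_def)
      thus "y \<in> {y. agree m x y}" unfolding agree_def by blast
    qed
    ultimately show "\<exists>U. finite {i \<in> UNIV. U i \<noteq> topspace (discrete_topology UNIV)} \<and>
          (\<forall>i\<in>UNIV. openin (discrete_topology UNIV) (U i)) \<and> z \<in> Pi\<^sub>E UNIV U \<and> Pi\<^sub>E UNIV U \<subseteq> {y. agree m x y}"
      using fin by (intro exI[of _ U]) auto
  qed
  thus ?thesis by (simp add: full_shift_top_def)
qed

lemma open_cyl: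
  assumes "openin full_shift_top T" "x \<in> T"
  shows "\<exists>m. {y. agree m x y} \<subseteq> T"
proof -
  from assms obtain U where fin: "finite {i. U i \<noteq> (UNIV::'a set)}" and xU: "x \<in> Pi\<^sub>E UNIV U"
     and sub: "Pi\<^sub>E UNIV U \<subseteq> T"
    unfolding full_shift_top_def openin_product_topology_alt by fastforce
  define m where "m = Max (insert 0 (abs ` {i. U i \<noteq> UNIV}))"
  have "{y. agree m x y} \<subseteq> Pi\<^sub>E UNIV U"
  proof
    fix y assume y: "y \<in> {y. agree m x y}"
    have "y i \<in> U i" for i
    proof (cases "U i = UNIV")
      case False
      hence "abs i \<le> m" unfolding m_def using fin by (intro Max_ge) auto
      hence "y i = x i" using y agree_at by blast
      thus ?thesis using xU by auto
    qed auto
    thus "y \<in> Pi\<^sub>E UNIV U" by auto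
  qed
  thus ?thesis using sub by blast
qed

lemma cont_discrete_iff:
  "continuous_map (subtopology full_shift_top S) (discrete_topology UNIV) f \<longleftrightarrow>
   (\<forall>x\<in>S. \<exists>m. \<forall>y\<in>S. agree m x y \<longrightarrow> f y = f x)"
proof
  assume c: "continuous_map (subtopology full_shift_top S) (discrete_topology UNIV) f"
  show "\<forall>x\<in>S. \<exists>m. \<forall>y\<in>S. agree m x y \<longrightarrow> f y = f x"
  proof
    fix x assume x: "x \<in> S"
    have cc: "\<forall>U. openin (discrete_topology UNIV) U \<longrightarrow> openin (subtopology full_shift_top S) {z \<in> topspace (subtopology full_shift_top S). f z \<in> U}"
      using c unfolding continuous_map_def by (rule conjunct2)
    have "openin (subtopology full_shift_top S) {z \<in> topspace (subtopology full_shift_top S). f z \<in> {f x}}"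
      using spec[OF cc, of "{f x}"] by simp
    hence "openin (subtopology full_shift_top S) {z \<in> S. f z = f x}" by simp
    then obtain T where T1: "openin full_shift_top T" and T2: "{z \<in> S. f z = f x} = T \<inter> S"
      unfolding openin_subtopology by (elim exE conjE) (rule that)
    have "x \<in> {z \<in> S. f z = f x}" using x by simp
    hence "x \<in> T" using T2 by (simp only: Int_iff)
    then obtain m where m: "{y. agree m x y} \<subseteq> T" using open_cyl T1 by blast
    have "f y = f x" if "y \<in> S" "agree m x y" for y
    proof -
      have "y \<in> T" using m that by blast
      hence "y \<in> T \<inter> S" using that by simp
      hence "y \<in> {z \<in> S. f z = f x}" using T2 by (simp only:)
      thus ?thesis by simp
    qed
    thus "\<exists>m. \<forall>y\<in>S. agree m x y \<longrightarrow> f y = f x" by blast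
  qed
next
  assume L: "\<forall>x\<in>S. \<exists>m. \<forall>y\<in>S. agree m x y \<longrightarrow> f y = f x"
  show "continuous_map (subtopology full_shift_top S) (discrete_topology UNIV) f"
    unfolding continuous_map_def
  proof (intro conjI allI impI)
    fix U :: "'b set"
    show "openin (subtopology full_shift_top S) {x \<in> topspace (subtopology full_shift_top S). f x \<in> U}"
    proof (subst openin_subopen, intro ballI)
      fix x assume "x \<in> {x \<in> topspace (subtopology full_shift_top S). f x \<in> U}"
      hence x: "x \<in> S" "f x \<in> U" by auto
      then obtain m where m: "\<forall>y\<in>S. agree m x y \<longrightarrow> f y = f x" using L by blast
      have "openin (subtopology full_shift_top S) ({y. agree m x y} \<inter> S)"
        unfolding openin_subtopology by (intro exI[of _ "{y. agree m x y}"]) (simp add: cyl_open)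
      moreover have "x \<in> {y. agree m x y} \<inter> S" using x by (auto simp: agree_def)
      moreover have "{y. agree m x y} \<inter> S \<subseteq> {x \<in> topspace (subtopology full_shift_top S). f x \<in> U}"
        using m x by auto
      ultimately show "\<exists>T. openin (subtopology full_shift_top S) T \<and> x \<in> T \<and>
          T \<subseteq> {x \<in> topspace (subtopology full_shift_top S). f x \<in> U}" by blast
    qed
  qed simp
qed

lemma cont_shift_iff:
  "continuous_map X (subtopology full_shift_top T) f \<longleftrightarrow>
   f \<in> topspace X \<rightarrow> T \<and> (\<forall>i. continuous_map X (discrete_topology UNIV) (\<lambda>x. f x i))"
  unfolding continuous_map_in_subtopology full_shift_top_def continuous_map_componentwise_UNIV by (rule conj_commute)

lemma agree_trans: "agree m c x \<Longrightarrow> agree M x y \<Longrightarrow> m \<le> M \<Longrightarrow> agree m c y"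
  unfolding agree_def
proof (intro allI impI)
  fix j assume a: "\<forall>j. - m \<le> j \<and> j \<le> m \<longrightarrow> x j = c j" "\<forall>j. - M \<le> j \<and> j \<le> M \<longrightarrow> y j = x j"
    "m \<le> M" "- m \<le> j \<and> j \<le> m"
  hence "y j = x j" by simp
  also have "x j = c j" using a by simp
  finally show "y j = c j" .
qed

lemma uniform_local:
  assumes K: "compactin full_shift_top S"
    and L: "\<forall>x\<in>S. \<exists>m. \<forall>y\<in>S. agree m x y \<longrightarrow> f y = f x"
  shows "\<exists>M\<ge>0. \<forall>x\<in>S. \<forall>y\<in>S. agree M x y \<longrightarrow> f y = f x"
proof -
  from bchoice[OF L] obtain m where m: "\<forall>x\<in>S. \<forall>y\<in>S. agree (m x) x y \<longrightarrow> f y = f x" by blast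
  define CC where "CC = (\<lambda>x. {y. agree (m x) x y}) ` S"
  have o: "\<forall>B\<in>CC. openin full_shift_top B" unfolding CC_def using cyl_open by blast
  have "x \<in> {y. agree (m x) x y}" for x by (simp add: agree_def)
  hence cov: "S \<subseteq> \<Union>CC" unfolding CC_def by blast
  have cK: "\<forall>U. (\<forall>B\<in>U. openin full_shift_top B) \<and> S \<subseteq> \<Union>U \<longrightarrow> (\<exists>F. finite F \<and> F \<subseteq> U \<and> S \<subseteq> \<Union>F)"
    using K unfolding compactin_def by (rule conjunct2)
  have oc: "(\<forall>B\<in>CC. openin full_shift_top B) \<and> S \<subseteq> \<Union>CC" using o cov by (rule conjI)
  have "\<exists>F. finite F \<and> F \<subseteq> CC \<and> S \<subseteq> \<Union>F" using mp[OF spec[OF cK, of CC] oc] .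
  then obtain F where F: "finite F" "F \<subseteq> CC" "S \<subseteq> \<Union>F" by blast
  from finite_subset_image[OF F(1) F(2)[unfolded CC_def]]
  obtain S0 where S0: "S0 \<subseteq> S" "finite S0" "F = (\<lambda>x. {y. agree (m x) x y}) ` S0"
    by blast
  define M where "M = Max (insert 0 (m ` S0))"
  have M0: "M \<ge> 0" unfolding M_def using S0 by simp
  have "\<forall>x\<in>S. \<forall>y\<in>S. agree M x y \<longrightarrow> f y = f x"
  proof (intro ballI impI)
    fix x y assume xy: "x \<in> S" "y \<in> S" "agree M x y"
    have "x \<in> \<Union>((\<lambda>x. {y. agree (m x) x y}) ` S0)" using xy(1) F(3) S0(3) by blast
    then obtain c where c: "c \<in> S0" "agree (m c) c x" by blast
    have "m c \<le> M" unfolding M_def using S0(2) c(1) by (intro Max_ge) auto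
    hence "agree (m c) c y" using c xy(3) agree_trans by blast
    moreover have cS: "c \<in> S" using c S0 by blast
    ultimately have "f y = f c" using m xy(2) by blast
    moreover have "f x = f c" using m cS c(2) xy(1) by blast
    ultimately show "f y = f x" by simp
  qed
  thus ?thesis using M0 by blast
qed

lemma edge_shift_compact:
  assumes "finite E"
  shows "compactin full_shift_top (edge_shift E s t)"
proof -
  have K: "compactin full_shift_top (Pi\<^sub>E UNIV (\<lambda>_. E))"
    unfolding full_shift_top_def compactin_PiE using assms by (simp add: finite_imp_compactin)
  have sub: "edge_shift E s t \<subseteq> Pi\<^sub>E UNIV (\<lambda>_. E)" by (auto simp: edge_shift_def)
  have "closedin full_shift_top {x. x i \<in> E \<and> t (x i) = s (x (i+1))}" for i
  proof -
    have c: "continuous_map full_shift_top (discrete_topology UNIV) (\<lambda>x. (x i, x (i+1)))"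
    proof -
      have "continuous_map (subtopology full_shift_top UNIV) (discrete_topology UNIV) (\<lambda>x. (x i, x (i+1)))"
        unfolding cont_discrete_iff
        by (intro ballI exI[of _ "abs i + 1"]) (auto intro!: agree_at)
      thus ?thesis by simp
    qed
    show ?thesis using closedin_continuous_map_preimage[OF c, of "{(a,b). a \<in> E \<and> t a = s b}"] by simp
  qed
  hence "closedin full_shift_top (\<Inter>i. {x. x i \<in> E \<and> t (x i) = s (x (i+1))})"
    by (intro closedin_Inter) auto
  moreover have "(\<Inter>i. {x. x i \<in> E \<and> t (x i) = s (x (i+1))}) = edge_shift E s t"
    by (auto simp: edge_shift_def)
  ultimately show ?thesis using closed_compactin[OF K sub] by simp
qed



lemma trim_edge_shift:
  assumes W: "\<forall>d\<in>D. src d \<in> W \<and> trg d \<in> W"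
  shows "edge_shift (trim_edges src trg (W,D)) src trg = edge_shift D src trg"
proof
  show "edge_shift (trim_edges src trg (W,D)) src trg \<subseteq> edge_shift D src trg"
    unfolding edge_shift_def trim_edges_def
    by (auto dest: spec[where x=0] simp del: funpow.simps)
       (metis funpow_0 snd_conv)
next
  show "edge_shift D src trg \<subseteq> edge_shift (trim_edges src trg (W,D)) src trg"
  proof
    fix x assume x: "x \<in> edge_shift D src trg"
    hence xD: "x i \<in> D" and xc: "trg (x i) = src (x (i+1))" for i by (auto simp: edge_shift_def)
    have "(\<forall>i. x i \<in> snd ((trim_step src trg ^^ n) (W,D))) \<and>
          (\<forall>i. src (x i) \<in> fst ((trim_step src trg ^^ n) (W,D)) \<and> trg (x i) \<in> fst ((trim_step src trg ^^ n) (W,D)))" for n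
    proof (induction n)
      case 0
      then show ?case using xD W by auto
    next
      case (Suc n)
      obtain W1 D1 where WD: "(trim_step src trg ^^ n) (W,D) = (W1,D1)" by fastforce
      have IH: "x i \<in> D1" "src (x i) \<in> W1" "trg (x i) \<in> W1" for i using Suc WD by auto
      define W' where "W' = {v \<in> W1. (\<exists>d\<in>D1. src d = v) \<and> (\<exists>d\<in>D1. trg d = v)}"
      have st: "trim_step src trg (W1,D1) = (W', {d \<in> D1. src d \<in> W' \<and> trg d \<in> W'})"
        by (simp add: trim_step_def W'_def Let_def)
      have sW: "src (x i) \<in> W'" for i
      proof -
        have "trg (x (i-1)) = src (x i)" using xc[of "i-1"] by simp
        thus ?thesis using IH by (auto simp: W'_def)
      qed
      have tW: "trg (x i) \<in> W'" for i using sW[of "i+1"] xc[of i] by simp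
      show ?case using WD st sW tW IH by simp
    qed
    thus "x \<in> edge_shift (trim_edges src trg (W,D)) src trg"
      using xc by (auto simp: edge_shift_def trim_edges_def)
  qed
qed

lemma sc_edge_shift_eq:
  "edge_shift (sc_edges V E s t L) sc_src sc_trg = edge_shift (sc_edges0 V E s t L) sc_src sc_trg"
  unfolding sc_edges_def
  by (rule trim_edge_shift) (auto simp: sc_edges0_def sc_src_def sc_trg_def)

lemma sc_facts:
  assumes "z \<in> edge_shift (sc_edges V E s t L) sc_src sc_trg"
  shows "sc_src (z i) \<noteq> {}" "sc_src (z i) \<subseteq> V"
    "sc_src (z i) \<subseteq> {s e |e. e \<in> E \<and> L e = sc_label (z i)}"
    "sc_src (z (i+1)) = {t e |e. e \<in> E \<and> s e \<in> sc_src (z i) \<and> L e = sc_label (z i)}"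
    "sc_trg (z i) = sc_src (z (i+1))"
proof -
  have z: "z \<in> edge_shift (sc_edges0 V E s t L) sc_src sc_trg" using assms sc_edge_shift_eq by blast
  hence zi: "z i \<in> sc_edges0 V E s t L" and c: "sc_trg (z i) = sc_src (z (i+1))"
    by (auto simp: edge_shift_def)
  obtain F a F' where zz: "z i = (F,a,F')" by (cases "z i") auto
  show "sc_src (z i) \<noteq> {}" "sc_src (z i) \<subseteq> V"
    "sc_src (z i) \<subseteq> {s e |e. e \<in> E \<and> L e = sc_label (z i)}"
    using zi zz by (auto simp: sc_edges0_def sc_vertices0_def sc_src_def sc_label_def)
  show "sc_src (z (i+1)) = {t e |e. e \<in> E \<and> s e \<in> sc_src (z i) \<and> L e = sc_label (z i)}"
    using zi zz c by (auto simp: sc_edges0_def sc_vertices0_def sc_src_def sc_label_def sc_trg_def)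
  show "sc_trg (z i) = sc_src (z (i+1))" by (rule c)
qed


definition PP :: "'e set \<Rightarrow> ('e \<Rightarrow> 'v) \<Rightarrow> ('e \<Rightarrow> 'v) \<Rightarrow> ('e \<Rightarrow> 'a) \<Rightarrow>
    (int \<Rightarrow> 'v set \<times> 'a \<times> 'v set) \<Rightarrow> (int \<Rightarrow> 'e) set" where
  "PP E s t L z = {x \<in> edge_shift E s t. \<forall>i. L (x i) = sc_label (z i) \<and> s (x i) \<in> sc_src (z i)}"

lemma konig:
  assumes z: "z \<in> edge_shift (sc_edges V E s t L) sc_src sc_trg" and v: "v \<in> sc_src (z i)"
  shows "\<exists>x\<in>PP E s t L z. s (x i) = v"
proof -
  define F where "F k = sc_src (z k)" for k
  define y where "y k = sc_label (z k)" for k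
  have Fs: "F k \<subseteq> {s e |e. e \<in> E \<and> L e = y k}" for k
    using sc_facts(3)[OF z] by (simp add: F_def y_def)
  have Ft: "F (k+1) = {t e |e. e \<in> E \<and> s e \<in> F k \<and> L e = y k}" for k
    using sc_facts(4)[OF z] by (simp add: F_def y_def)
  have fex: "\<exists>e. e \<in> E \<and> s e = u \<and> L e = y k" if "u \<in> F k" for u k
  proof -
    have "u \<in> {s e |e. e \<in> E \<and> L e = y k}" using Fs[of k] that by (rule subsetD)
    thus ?thesis by blast
  qed
  define f where "f k u = (SOME e. e \<in> E \<and> s e = u \<and> L e = y k)" for k u
  have f: "f k u \<in> E \<and> s (f k u) = u \<and> L (f k u) = y k" if "u \<in> F k" for u k
    unfolding f_def by (rule someI_ex[OF fex[OF that]])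
  have ft: "t (f k u) \<in> F (k+1)" if "u \<in> F k" for u k
  proof -
    have "t (f k u) \<in> {t e |e. e \<in> E \<and> s e \<in> F k \<and> L e = y k}"
      using f[OF that] that by (intro CollectI exI[of _ "f k u"]) simp
    thus ?thesis using Ft[of k] by (simp only:)
  qed
  have bex: "\<exists>e. e \<in> E \<and> t e = u \<and> s e \<in> F (k-1) \<and> L e = y (k-1)" if "u \<in> F k" for u k
  proof -
    have "u \<in> F (k - 1 + 1)" using that by simp
    hence "u \<in> {t e |e. e \<in> E \<and> s e \<in> F (k-1) \<and> L e = y (k-1)}" using Ft[of "k-1"] by (simp only:)
    thus ?thesis by blast
  qed
  define b where "b k u = (SOME e. e \<in> E \<and> t e = u \<and> s e \<in> F (k-1) \<and> L e = y (k-1))" for k u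
  have b: "b k u \<in> E \<and> t (b k u) = u \<and> s (b k u) \<in> F (k-1) \<and> L (b k u) = y (k-1)" if "u \<in> F k" for u k
    unfolding b_def by (rule someI_ex[OF bex[OF that]])
  define fw where "fw = rec_nat v (\<lambda>n u. t (f (i + int n) u))"
  define bw where "bw = rec_nat v (\<lambda>n u. s (b (i - int n) u))"
  have fw0: "fw 0 = v" and fwS: "fw (Suc n) = t (f (i + int n) (fw n))" for n by (simp_all add: fw_def)
  have bw0: "bw 0 = v" and bwS: "bw (Suc n) = s (b (i - int n) (bw n))" for n by (simp_all add: bw_def)
  have fwF: "fw n \<in> F (i + int n)" for n
  proof (induction n)
    case 0 then show ?case using v fw0 by (simp add: F_def)
  next
    case (Suc n)
    have e: "i + int (Suc n) = i + int n + 1" by simp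
    show ?case unfolding e fwS using ft[OF Suc] by simp
  qed
  have bwF: "bw n \<in> F (i - int n)" for n
  proof (induction n)
    case 0 then show ?case using v bw0 by (simp add: F_def)
  next
    case (Suc n)
    have e: "i - int (Suc n) = i - int n - 1" by simp
    show ?case unfolding e bwS using b[OF Suc] by simp
  qed
  define vtx where "vtx k = (if i \<le> k then fw (nat (k - i)) else bw (nat (i - k)))" for k
  have vF: "vtx k \<in> F k" for k
  proof (cases "i \<le> k")
    case True thus ?thesis using fwF[of "nat (k-i)"] by (simp add: vtx_def)
  next
    case False thus ?thesis using bwF[of "nat (i-k)"] by (simp add: vtx_def)
  qed
  define x where "x k = (if i \<le> k then f k (vtx k) else b (k+1) (vtx (k+1)))" for k
  have xk: "x k \<in> E \<and> s (x k) = vtx k \<and> t (x k) = vtx (k+1) \<and> L (x k) = y k" for k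
  proof (cases "i \<le> k")
    case True
    define n where "n = nat (k - i)"
    have kn: "k = i + int n" using True by (simp add: n_def)
    have v: "vtx k = fw n" using True by (simp add: vtx_def n_def)
    have xx: "x k = f k (vtx k)" using True by (simp add: x_def)
    have "nat (k + 1 - i) = Suc n" using True by (simp add: n_def)
    hence v1: "vtx (k+1) = fw (Suc n)" using True by (simp add: vtx_def)
    have "fw (Suc n) = t (f k (fw n))" using fwS[of n] kn by simp
    hence "t (x k) = vtx (k+1)" using xx v v1 by simp
    thus ?thesis using f[OF vF[of k]] xx by simp
  next
    case False
    define n where "n = nat (i - (k+1))"
    have kn: "i - int n = k + 1" using False by (simp add: n_def)
    have v1: "vtx (k+1) = bw n"
    proof (cases "i \<le> k+1")
      case True
      hence "n = 0" "k + 1 = i" using False by (auto simp: n_def)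
      thus ?thesis using bw0 fw0 by (simp add: vtx_def)
    next
      case False
      thus ?thesis by (simp add: vtx_def n_def)
    qed
    have xx: "x k = b (k+1) (vtx (k+1))" using False by (simp add: x_def)
    have "bw (Suc n) = s (b (k+1) (bw n))" using bwS[of n] kn by simp
    hence "s (x k) = bw (Suc n)" using xx v1 by simp
    moreover have "nat (i - k) = Suc n" using False by (simp add: n_def)
    hence "vtx k = bw (Suc n)" using False by (simp add: vtx_def)
    ultimately have sx: "s (x k) = vtx k" by simp
    have "x k \<in> E \<and> t (x k) = vtx (k+1) \<and> L (x k) = y k"
      using b[OF vF[of "k+1"]] xx by simp
    thus ?thesis using sx by simp
  qed
  have "x \<in> edge_shift E s t" unfolding edge_shift_def
  proof (intro CollectI allI conjI)
    fix k show "x k \<in> E" using xk[of k] by blast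
    show "t (x k) = s (x (k + 1))" using xk[of k] xk[of "k+1"] by simp
  qed
  moreover have "\<forall>k. L (x k) = sc_label (z k) \<and> s (x k) \<in> sc_src (z k)"
  proof
    fix k show "L (x k) = sc_label (z k) \<and> s (x k) \<in> sc_src (z k)"
      using xk[of k] vF[of k] unfolding F_def y_def by simp
  qed
  ultimately have "x \<in> PP E s t L z" unfolding PP_def by blast
  moreover have "s (x i) = v" using xk[of i] fw0 by (simp add: vtx_def)
  ultimately show ?thesis by blast
qed


lemma fwd_det:
  assumes rr: "right_resolving E s L" and x: "x \<in> edge_shift E s t" and x': "x' \<in> edge_shift E s t"
    and st: "s (x a) = s (x' a)" and lab: "\<forall>j. a \<le> j \<and> j \<le> b \<longrightarrow> L (x j) = L (x' j)"
  shows "\<forall>j. a \<le> j \<and> j \<le> b \<longrightarrow> x j = x' j"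
proof -
  have xe: "x j \<in> E" "x' j \<in> E" "t (x j) = s (x (j+1))" "t (x' j) = s (x' (j+1))" for j
    using x x' by (auto simp: edge_shift_def)
  have "a + int n \<le> b \<longrightarrow> x (a + int n) = x' (a + int n)" for n
  proof (induction n)
    case 0 then show ?case using rr st lab xe by (auto simp: right_resolving_def)
  next
    case (Suc n)
    show ?case
    proof
      assume le: "a + int (Suc n) \<le> b"
      hence "x (a + int n) = x' (a + int n)" using Suc by simp
      hence "s (x (a + int n + 1)) = s (x' (a + int n + 1))" using xe by metis
      moreover have "L (x (a + int n + 1)) = L (x' (a + int n + 1))" using lab le by simp
      ultimately have "x (a + int n + 1) = x' (a + int n + 1)"
        using rr xe by (auto simp: right_resolving_def)
      moreover have "a + int (Suc n) = a + int n + 1" by simp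
      ultimately show "x (a + int (Suc n)) = x' (a + int (Suc n))" by (simp only:)
    qed
  qed
  thus ?thesis by (metis le_add_diff_inverse nat_0_le add_le_cancel_left diff_ge_0_iff_ge int_nat_eq)
qed

lemma shift_edge_shift: "x \<in> edge_shift E s t \<Longrightarrow> shift x \<in> edge_shift E s t"
  by (auto simp: edge_shift_def shift_def)

lemma unshift_edge_shift: "x \<in> edge_shift E s t \<Longrightarrow> (\<lambda>k. x (k - 1)) \<in> edge_shift E s t"
  unfolding edge_shift_def by auto



lemma recon:
  assumes z: "z \<in> edge_shift (sc_edges V E s t L) sc_src sc_trg"
  shows "z i = ({s (x i) |x. x \<in> PP E s t L z}, sc_label (z i), {s (x (i+1)) |x. x \<in> PP E s t L z})"
proof -
  have F: "{s (x k) |x. x \<in> PP E s t L z} = sc_src (z k)" for k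
  proof
    show "{s (x k) |x. x \<in> PP E s t L z} \<subseteq> sc_src (z k)" by (auto simp: PP_def)
    show "sc_src (z k) \<subseteq> {s (x k) |x. x \<in> PP E s t L z}"
    proof
      fix v assume "v \<in> sc_src (z k)"
      then obtain x where "x \<in> PP E s t L z" "s (x k) = v" using konig[OF z] by blast
      thus "v \<in> {s (x k) |x. x \<in> PP E s t L z}" by blast
    qed
  qed
  have "z i = (sc_src (z i), sc_label (z i), sc_trg (z i))"
    by (simp add: sc_src_def sc_label_def sc_trg_def)
  also have "\<dots> = (sc_src (z i), sc_label (z i), sc_src (z (i+1)))" using sc_facts(5)[OF z] by simp
  finally show ?thesis using F[of i] F[of "i+1"] by simp
qed

lemma label_shift: "label_map L (shift x) = shift (label_map L x)"
  by (simp add: label_map_def shift_def)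

lemma agree_sym: "agree m x y \<Longrightarrow> agree m y x"
  unfolding agree_def
proof (intro allI impI)
  fix j assume "\<forall>j. - m \<le> j \<and> j \<le> m \<longrightarrow> y j = x j" "- m \<le> j \<and> j \<le> m"
  hence "y j = x j" by blast
  thus "x j = y j" by (rule sym)
qed

lemma agree_label: "agree m x y \<Longrightarrow> agree m (label_map L x) (label_map L y)"
  unfolding agree_def label_map_def by simp

definition Phi :: "'e set \<Rightarrow> ('e \<Rightarrow> 'v) \<Rightarrow> ('e \<Rightarrow> 'v) \<Rightarrow> ('e \<Rightarrow> 'a) \<Rightarrow> ('f \<Rightarrow> 'w) \<Rightarrow>
   ((int \<Rightarrow> 'e) \<Rightarrow> (int \<Rightarrow> 'f)) \<Rightarrow> ((int \<Rightarrow> 'a) \<Rightarrow> (int \<Rightarrow> 'a)) \<Rightarrow>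
   (int \<Rightarrow> 'v set \<times> 'a \<times> 'v set) \<Rightarrow> int \<Rightarrow> 'w set \<times> 'a \<times> 'w set" where
  "Phi E s t L sH \<phi> \<psi> z = (\<lambda>i. ({sH (\<phi> x i) |x. x \<in> PP E s t L z}, \<psi> (label_map sc_label z) i,
      {sH (\<phi> x (i+1)) |x. x \<in> PP E s t L z}))"

locale xfer =
  fixes VG :: "'v set" and EG :: "'e set" and sG tG :: "'e \<Rightarrow> 'v" and LG :: "'e \<Rightarrow> 'a"
    and VH :: "'w set" and EH :: "'f set" and sH tH :: "'f \<Rightarrow> 'w" and LH :: "'f \<Rightarrow> 'a"
    and \<phi> :: "(int \<Rightarrow> 'e) \<Rightarrow> (int \<Rightarrow> 'f)" and g :: "(int \<Rightarrow> 'f) \<Rightarrow> (int \<Rightarrow> 'e)"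
    and \<psi> :: "(int \<Rightarrow> 'a) \<Rightarrow> (int \<Rightarrow> 'a)"
  assumes gG: "fin_graph_no_sink_source VG EG sG tG"
    and gH: "fin_graph_no_sink_source VH EH sH tH"
    and rrG: "right_resolving EG sG LG" and rrH: "right_resolving EH sH LH"
    and phic: "continuous_map (subtopology full_shift_top (edge_shift EG sG tG))
                 (subtopology full_shift_top (edge_shift EH sH tH)) \<phi>"
    and gc: "continuous_map (subtopology full_shift_top (edge_shift EH sH tH))
                 (subtopology full_shift_top (edge_shift EG sG tG)) g"
    and gphi: "\<forall>x\<in>edge_shift EG sG tG. g (\<phi> x) = x"
    and phig: "\<forall>u\<in>edge_shift EH sH tH. \<phi> (g u) = u"
    and phishift: "\<forall>x\<in>edge_shift EG sG tG. \<phi> (shift x) = shift (\<phi> x)"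
    and psic: "continuous_map (subtopology full_shift_top (label_map LG ` edge_shift EG sG tG))
                 (subtopology full_shift_top (label_map LH ` edge_shift EH sH tH)) \<psi>"
    and psishift: "\<forall>y\<in>label_map LG ` edge_shift EG sG tG. \<psi> (shift y) = shift (\<psi> y)"
    and lab: "\<forall>x\<in>edge_shift EG sG tG. label_map LH (\<phi> x) = \<psi> (label_map LG x)"
begin

lemma phi_in: "x \<in> edge_shift EG sG tG \<Longrightarrow> \<phi> x \<in> edge_shift EH sH tH"
  using phic unfolding continuous_map_def by auto

lemma P_sub: "PP EG sG tG LG z \<subseteq> edge_shift EG sG tG" by (auto simp: PP_def)

lemma P_label: "x \<in> PP EG sG tG LG z \<Longrightarrow> label_map LG x = label_map sc_label z"
  by (auto simp: PP_def label_map_def)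

lemma P_ne:
  assumes "z \<in> edge_shift (sc_edges VG EG sG tG LG) sc_src sc_trg"
  shows "PP EG sG tG LG z \<noteq> {}"
proof -
  obtain v where "v \<in> sc_src (z 0)" using sc_facts(1)[OF assms] by blast
  thus ?thesis using konig[OF assms] by blast
qed

lemma lab_Y:
  assumes "z \<in> edge_shift (sc_edges VG EG sG tG LG) sc_src sc_trg"
  shows "label_map sc_label z \<in> label_map LG ` edge_shift EG sG tG"
proof -
  obtain x where "x \<in> PP EG sG tG LG z" using P_ne[OF assms] by blast
  thus ?thesis using P_label P_sub by (metis image_eqI subsetD)
qed

lemma Phi_in:
  assumes z: "z \<in> edge_shift (sc_edges VG EG sG tG LG) sc_src sc_trg"
  shows "Phi EG sG tG LG sH \<phi> \<psi> z \<in> edge_shift (sc_edges VH EH sH tH LH) sc_src sc_trg"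
proof -
  define P where "P = PP EG sG tG LG z"
  define A where "A k = {sH (\<phi> x k) |x. x \<in> P}" for k
  define y where "y = label_map sc_label z"
  have Phi_eq: "Phi EG sG tG LG sH \<phi> \<psi> z k = (A k, \<psi> y k, A (k+1))" for k
    by (simp add: Phi_def A_def y_def P_def)
  have phiP: "\<phi> x \<in> edge_shift EH sH tH" if "x \<in> P" for x
    using phi_in P_sub that unfolding P_def by blast
  have phiE: "\<phi> x k \<in> EH" "tH (\<phi> x k) = sH (\<phi> x (k+1))" if "x \<in> P" for x k
    using phiP[OF that] by (auto simp: edge_shift_def)
  have psilab: "LH (\<phi> x k) = \<psi> y k" if "x \<in> P" for x k
  proof -
    have "label_map LH (\<phi> x) = \<psi> (label_map LG x)" using lab P_sub that unfolding P_def by blast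
    also have "label_map LG x = y" using P_label that unfolding P_def y_def by blast
    finally show ?thesis by (simp add: label_map_def fun_eq_iff)
  qed
  have Pne: "P \<noteq> {}" using P_ne[OF z] by (simp add: P_def)
  have Avert: "A k \<in> sc_vertices0 VH" for k
  proof -
    have "A k \<subseteq> VH" using phiE gH unfolding A_def fin_graph_no_sink_source_def by blast
    moreover have "A k \<noteq> {}" using Pne unfolding A_def by blast
    ultimately show ?thesis by (simp add: sc_vertices0_def)
  qed
  have Asub: "A k \<subseteq> {sH e |e. e \<in> EH \<and> LH e = \<psi> y k}" for k
    unfolding A_def using phiE psilab by blast
  have Anext: "A (k+1) = {tH e |e. e \<in> EH \<and> sH e \<in> A k \<and> LH e = \<psi> y k}" for k
  proof
    show "A (k+1) \<subseteq> {tH e |e. e \<in> EH \<and> sH e \<in> A k \<and> LH e = \<psi> y k}"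
    proof
      fix w assume "w \<in> A (k+1)"
      then obtain x where x: "x \<in> P" "w = sH (\<phi> x (k+1))" unfolding A_def by blast
      have "sH (\<phi> x k) \<in> A k" using x unfolding A_def by blast
      thus "w \<in> {tH e |e. e \<in> EH \<and> sH e \<in> A k \<and> LH e = \<psi> y k}"
        using x phiE[OF x(1)] psilab[OF x(1)] by (intro CollectI exI[of _ "\<phi> x k"]) simp
    qed
    show "{tH e |e. e \<in> EH \<and> sH e \<in> A k \<and> LH e = \<psi> y k} \<subseteq> A (k+1)"
    proof
      fix w assume "w \<in> {tH e |e. e \<in> EH \<and> sH e \<in> A k \<and> LH e = \<psi> y k}"
      then obtain e where e: "w = tH e" "e \<in> EH" "sH e \<in> A k" "LH e = \<psi> y k" by blast
      then obtain x where x: "x \<in> P" "sH e = sH (\<phi> x k)" unfolding A_def by blast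
      have "e = \<phi> x k" using rrH e x phiE[OF x(1)] psilab[OF x(1)]
        unfolding right_resolving_def by metis
      hence "w = sH (\<phi> x (k+1))" using e phiE[OF x(1)] by simp
      thus "w \<in> A (k+1)" using x unfolding A_def by blast
    qed
  qed
  have "Phi EG sG tG LG sH \<phi> \<psi> z k \<in> sc_edges0 VH EH sH tH LH" for k
    unfolding Phi_eq sc_edges0_def using Avert Asub Anext by blast
  moreover have "sc_trg (Phi EG sG tG LG sH \<phi> \<psi> z k) = sc_src (Phi EG sG tG LG sH \<phi> \<psi> z (k+1))" for k
    unfolding Phi_eq by (simp add: sc_trg_def sc_src_def)
  ultimately have "Phi EG sG tG LG sH \<phi> \<psi> z \<in> edge_shift (sc_edges0 VH EH sH tH LH) sc_src sc_trg"
    by (simp add: edge_shift_def)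
  thus ?thesis using sc_edge_shift_eq by blast
qed


lemma Phi_Q:
  assumes z: "z \<in> edge_shift (sc_edges VG EG sG tG LG) sc_src sc_trg"
  shows "PP EH sH tH LH (Phi EG sG tG LG sH \<phi> \<psi> z) = \<phi> ` PP EG sG tG LG z"
proof -
  define P where "P = PP EG sG tG LG z"
  define y where "y = label_map sc_label z"
  define w where "w = Phi EG sG tG LG sH \<phi> \<psi> z"
  have wl: "sc_label (w k) = \<psi> y k" for k by (simp add: w_def Phi_def y_def sc_label_def)
  have ws: "sc_src (w k) = {sH (\<phi> x k) |x. x \<in> P}" for k by (simp add: w_def Phi_def P_def sc_src_def)
  have psilab: "LH (\<phi> x k) = \<psi> y k" if "x \<in> P" for x k
  proof -
    have "label_map LH (\<phi> x) = \<psi> (label_map LG x)" using lab P_sub that unfolding P_def by blast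
    also have "label_map LG x = y" using P_label that unfolding P_def y_def by blast
    finally show ?thesis by (simp add: label_map_def fun_eq_iff)
  qed
  have "PP EH sH tH LH w = \<phi> ` P"
  proof
    show "\<phi> ` P \<subseteq> PP EH sH tH LH w"
    proof
      fix u assume "u \<in> \<phi> ` P"
      then obtain x where x: "x \<in> P" "u = \<phi> x" by blast
      have "u \<in> edge_shift EH sH tH" using x phi_in P_sub unfolding P_def by blast
      moreover have "LH (u k) = sc_label (w k) \<and> sH (u k) \<in> sc_src (w k)" for k
        using x psilab[OF x(1)] by (auto simp: wl ws)
      ultimately show "u \<in> PP EH sH tH LH w" by (simp add: PP_def)
    qed
    show "PP EH sH tH LH w \<subseteq> \<phi> ` P"
    proof
      fix u assume u: "u \<in> PP EH sH tH LH w"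
      hence uX: "u \<in> edge_shift EH sH tH" and ul: "\<And>k. LH (u k) = \<psi> y k"
        and us: "\<And>k. sH (u k) \<in> {sH (\<phi> x k) |x. x \<in> P}"
        using wl ws by (auto simp: PP_def)
      have guX: "g u \<in> edge_shift EG sG tG" using gc uX unfolding continuous_map_def by auto
      have gloc: "\<forall>v\<in>edge_shift EH sH tH. \<exists>m. \<forall>v'\<in>edge_shift EH sH tH. agree m v v' \<longrightarrow> g v' j = g v j" for j
        using gc unfolding cont_shift_iff cont_discrete_iff by blast
      have "LG (g u j) = sc_label (z j) \<and> sG (g u j) \<in> sc_src (z j)" for j
      proof -
        obtain m where m: "\<forall>v'\<in>edge_shift EH sH tH. agree m u v' \<longrightarrow> g v' j = g u j"
          using gloc[of j] uX by blast
        obtain x where x: "x \<in> P" "sH (u (-m)) = sH (\<phi> x (-m))" using us[of "-m"] by blast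
        have vX: "\<phi> x \<in> edge_shift EH sH tH" using x phi_in P_sub unfolding P_def by blast
        have "\<forall>j. -m \<le> j \<and> j \<le> m \<longrightarrow> \<phi> x j = u j"
          using fwd_det[OF rrH vX uX, of "-m" m] x(2) ul psilab[OF x(1)] by simp
        hence "agree m u (\<phi> x)" by (simp add: agree_def)
        hence "g (\<phi> x) j = g u j" using m vX by blast
        moreover have "g (\<phi> x) = x" using gphi x P_sub unfolding P_def by blast
        ultimately have xj: "x j = g u j" by simp
        have "LG (x j) = sc_label (z j) \<and> sG (x j) \<in> sc_src (z j)"
          using x(1) unfolding P_def PP_def by blast
        thus ?thesis using xj by simp
      qed
      hence "g u \<in> P" using guX unfolding P_def PP_def by blast
      moreover have "u = \<phi> (g u)" using phig uX by simp
      ultimately show "u \<in> \<phi> ` P" by blast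
    qed
  qed
  thus ?thesis by (simp add: w_def P_def)
qed

lemma P_shift1: "x \<in> PP EG sG tG LG z \<Longrightarrow> shift x \<in> PP EG sG tG LG (shift z)"
  by (auto simp: PP_def shift_def intro: shift_edge_shift[unfolded shift_def])

lemma P_shift2:
  assumes "x \<in> PP EG sG tG LG (shift z)"
  shows "(\<lambda>k. x (k - 1)) \<in> PP EG sG tG LG z"
proof -
  have "x \<in> edge_shift EG sG tG" and h: "\<And>k. LG (x k) = sc_label (z (k+1)) \<and> sG (x k) \<in> sc_src (z (k+1))"
    using assms by (auto simp: PP_def shift_def)
  moreover have "LG (x (k-1)) = sc_label (z k) \<and> sG (x (k-1)) \<in> sc_src (z k)" for k
    using h[of "k-1"] by simp
  ultimately show ?thesis using unshift_edge_shift by (auto simp: PP_def)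
qed

lemma Phi_shift:
  assumes z: "z \<in> edge_shift (sc_edges VG EG sG tG LG) sc_src sc_trg"
  shows "Phi EG sG tG LG sH \<phi> \<psi> (shift z) = shift (Phi EG sG tG LG sH \<phi> \<psi> z)"
proof -
  have A: "{sH (\<phi> x k) |x. x \<in> PP EG sG tG LG (shift z)} = {sH (\<phi> x (k+1)) |x. x \<in> PP EG sG tG LG z}" for k
  proof
    show "{sH (\<phi> x k) |x. x \<in> PP EG sG tG LG (shift z)} \<subseteq> {sH (\<phi> x (k+1)) |x. x \<in> PP EG sG tG LG z}"
    proof
      fix w assume "w \<in> {sH (\<phi> x k) |x. x \<in> PP EG sG tG LG (shift z)}"
      then obtain x where x: "x \<in> PP EG sG tG LG (shift z)" "w = sH (\<phi> x k)" by blast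
      define x' where "x' = (\<lambda>k. x (k - 1))"
      have x': "x' \<in> PP EG sG tG LG z" using P_shift2[OF x(1)] by (simp add: x'_def)
      have "shift x' = x" by (simp add: x'_def shift_def)
      hence "\<phi> x = shift (\<phi> x')" using phishift x' P_sub by blast
      hence "w = sH (\<phi> x' (k+1))" using x(2) by (simp add: shift_def)
      thus "w \<in> {sH (\<phi> x (k+1)) |x. x \<in> PP EG sG tG LG z}" using x' by blast
    qed
    show "{sH (\<phi> x (k+1)) |x. x \<in> PP EG sG tG LG z} \<subseteq> {sH (\<phi> x k) |x. x \<in> PP EG sG tG LG (shift z)}"
    proof
      fix w assume "w \<in> {sH (\<phi> x (k+1)) |x. x \<in> PP EG sG tG LG z}"
      then obtain x where x: "x \<in> PP EG sG tG LG z" "w = sH (\<phi> x (k+1))" by blast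
      have "\<phi> (shift x) = shift (\<phi> x)" using phishift x P_sub by blast
      hence "w = sH (\<phi> (shift x) k)" using x(2) by (simp add: shift_def)
      thus "w \<in> {sH (\<phi> x k) |x. x \<in> PP EG sG tG LG (shift z)}" using P_shift1[OF x(1)] by blast
    qed
  qed
  have L: "\<psi> (label_map sc_label (shift z)) = shift (\<psi> (label_map sc_label z))"
    using psishift lab_Y[OF z] label_shift by metis
  show ?thesis
  proof
    fix k
    show "Phi EG sG tG LG sH \<phi> \<psi> (shift z) k = shift (Phi EG sG tG LG sH \<phi> \<psi> z) k"
      using A[of k] A[of "k+1"] L by (simp add: Phi_def shift_def)
  qed
qed

lemma A_sub:
  assumes z: "z \<in> edge_shift (sc_edges VG EG sG tG LG) sc_src sc_trg"
    and z': "z' \<in> edge_shift (sc_edges VG EG sG tG LG) sc_src sc_trg"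
    and ag: "agree M z z'" and M: "M \<ge> 0"
    and hf: "\<forall>x\<in>edge_shift EG sG tG. \<forall>x'\<in>edge_shift EG sG tG. agree M x x' \<longrightarrow> f x' = f x"
    and x: "x \<in> PP EG sG tG LG z"
  shows "\<exists>x'\<in>PP EG sG tG LG z'. f x' = f x"
proof -
  have zz: "z' j = z j" if "-M \<le> j \<and> j \<le> M" for j using ag that unfolding agree_def by blast
  have xX: "x \<in> edge_shift EG sG tG" and xl: "\<And>j. LG (x j) = sc_label (z j)"
    and xs: "\<And>j. sG (x j) \<in> sc_src (z j)" using x unfolding PP_def by blast+
  have "z' (-M) = z (-M)" using zz M by simp
  hence "sG (x (-M)) \<in> sc_src (z' (-M))" using xs[of "-M"] by simp
  then obtain x' where x'P: "x' \<in> PP EG sG tG LG z'" and x's: "sG (x' (-M)) = sG (x (-M))"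
    using konig[OF z'] by blast
  have x'X: "x' \<in> edge_shift EG sG tG" and x'l: "\<And>j. LG (x' j) = sc_label (z' j)"
    using x'P unfolding PP_def by blast+
  have "\<forall>j. -M \<le> j \<and> j \<le> M \<longrightarrow> LG (x j) = LG (x' j)"
  proof (intro allI impI)
    fix j assume "-M \<le> j \<and> j \<le> M"
    hence "z' j = z j" by (rule zz)
    thus "LG (x j) = LG (x' j)" by (simp only: xl x'l)
  qed
  moreover have "sG (x (-M)) = sG (x' (-M))" using x's by simp
  ultimately have "\<forall>j. -M \<le> j \<and> j \<le> M \<longrightarrow> x j = x' j"
    using fwd_det[OF rrG xX x'X] by blast
  hence "agree M x x'" unfolding agree_def by (metis)
  hence "f x' = f x" using hf xX x'X by blast
  thus ?thesis using x'P by blast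
qed

lemma Phi_cont:
  "continuous_map (subtopology full_shift_top (edge_shift (sc_edges VG EG sG tG LG) sc_src sc_trg))
     (subtopology full_shift_top (edge_shift (sc_edges VH EH sH tH LH) sc_src sc_trg))
     (Phi EG sG tG LG sH \<phi> \<psi>)"
  unfolding cont_shift_iff
proof (intro conjI allI)
  show "Phi EG sG tG LG sH \<phi> \<psi> \<in> topspace (subtopology full_shift_top (edge_shift (sc_edges VG EG sG tG LG) sc_src sc_trg))
      \<rightarrow> edge_shift (sc_edges VH EH sH tH LH) sc_src sc_trg"
    using Phi_in by auto
  fix i
  show "continuous_map (subtopology full_shift_top (edge_shift (sc_edges VG EG sG tG LG) sc_src sc_trg))
        (discrete_topology UNIV) (\<lambda>z. Phi EG sG tG LG sH \<phi> \<psi> z i)"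
    unfolding cont_discrete_iff
  proof
    fix z assume z: "z \<in> edge_shift (sc_edges VG EG sG tG LG) sc_src sc_trg"
    have ploc: "\<forall>x\<in>edge_shift EG sG tG. \<exists>m. \<forall>x'\<in>edge_shift EG sG tG. agree m x x' \<longrightarrow> \<phi> x' j = \<phi> x j" for j
      using phic unfolding cont_shift_iff cont_discrete_iff by blast
    have ploc2: "\<forall>x\<in>edge_shift EG sG tG. \<exists>m. \<forall>x'\<in>edge_shift EG sG tG. agree m x x' \<longrightarrow>
        (\<phi> x' i, \<phi> x' (i+1)) = (\<phi> x i, \<phi> x (i+1))"
    proof
      fix x assume x: "x \<in> edge_shift EG sG tG"
      obtain m1 where m1: "\<forall>x'\<in>edge_shift EG sG tG. agree m1 x x' \<longrightarrow> \<phi> x' i = \<phi> x i"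
        using ploc[of i] x by blast
      obtain m2 where m2: "\<forall>x'\<in>edge_shift EG sG tG. agree m2 x x' \<longrightarrow> \<phi> x' (i+1) = \<phi> x (i+1)"
        using ploc[of "i+1"] x by blast
      have "\<forall>x'\<in>edge_shift EG sG tG. agree (max m1 m2) x x' \<longrightarrow>
        (\<phi> x' i, \<phi> x' (i+1)) = (\<phi> x i, \<phi> x (i+1))"
        using m1 m2 agree_mono by (metis max.cobounded1 max.cobounded2)
      thus "\<exists>m. \<forall>x'\<in>edge_shift EG sG tG. agree m x x' \<longrightarrow>
        (\<phi> x' i, \<phi> x' (i+1)) = (\<phi> x i, \<phi> x (i+1))" by blast
    qed
    have cpt: "compactin full_shift_top (edge_shift EG sG tG)"
      using gG edge_shift_compact unfolding fin_graph_no_sink_source_def by blast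
    obtain M where M: "M \<ge> 0" and hf: "\<forall>x\<in>edge_shift EG sG tG. \<forall>x'\<in>edge_shift EG sG tG. agree M x x' \<longrightarrow>
        (\<phi> x' i, \<phi> x' (i+1)) = (\<phi> x i, \<phi> x (i+1))"
      using uniform_local[OF cpt ploc2] by blast
    have psiloc: "\<forall>y\<in>label_map LG ` edge_shift EG sG tG. \<exists>m. \<forall>y'\<in>label_map LG ` edge_shift EG sG tG.
        agree m y y' \<longrightarrow> \<psi> y' i = \<psi> y i"
      using psic unfolding cont_shift_iff cont_discrete_iff by blast
    obtain m3 where m3: "\<forall>y'\<in>label_map LG ` edge_shift EG sG tG.
        agree m3 (label_map sc_label z) y' \<longrightarrow> \<psi> y' i = \<psi> (label_map sc_label z) i"
      using psiloc lab_Y[OF z] by blast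
    have "Phi EG sG tG LG sH \<phi> \<psi> z' i = Phi EG sG tG LG sH \<phi> \<psi> z i"
      if z': "z' \<in> edge_shift (sc_edges VG EG sG tG LG) sc_src sc_trg" and ag: "agree (max M m3) z z'" for z'
    proof -
      have agM: "agree M z z'" using ag agree_mono by (metis max.cobounded1)
      hence agM': "agree M z' z" by (rule agree_sym)
      have "agree m3 z z'" using ag agree_mono by (metis max.cobounded2)
      hence "agree m3 (label_map sc_label z) (label_map sc_label z')" by (rule agree_label)
      hence L: "\<psi> (label_map sc_label z') i = \<psi> (label_map sc_label z) i" using m3 lab_Y[OF z'] by blast
      have S: "{sH (\<phi> x k) |x. x \<in> PP EG sG tG LG z1} \<subseteq> {sH (\<phi> x k) |x. x \<in> PP EG sG tG LG z2}"
        if k: "k = i \<or> k = i+1" and z1: "z1 \<in> edge_shift (sc_edges VG EG sG tG LG) sc_src sc_trg"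
          and z2: "z2 \<in> edge_shift (sc_edges VG EG sG tG LG) sc_src sc_trg" and a12: "agree M z1 z2" for k z1 z2
      proof
        fix w assume "w \<in> {sH (\<phi> x k) |x. x \<in> PP EG sG tG LG z1}"
        then obtain x where x: "x \<in> PP EG sG tG LG z1" "w = sH (\<phi> x k)" by blast
        obtain x' where x': "x' \<in> PP EG sG tG LG z2" "(\<phi> x' i, \<phi> x' (i+1)) = (\<phi> x i, \<phi> x (i+1))"
          using A_sub[OF z1 z2 a12 M hf x(1)] by blast
        have "\<phi> x' k = \<phi> x k" using x'(2) k by auto
        thus "w \<in> {sH (\<phi> x k) |x. x \<in> PP EG sG tG LG z2}" using x x'(1) by (metis (mono_tags, lifting) mem_Collect_eq)
      qed
      have "{sH (\<phi> x k) |x. x \<in> PP EG sG tG LG z'} = {sH (\<phi> x k) |x. x \<in> PP EG sG tG LG z}"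
        if "k = i \<or> k = i+1" for k
        using S[OF that z' z agM'] S[OF that z z' agM] by (rule equalityI)
      thus ?thesis using L by (simp add: Phi_def)
    qed
    thus "\<exists>m. \<forall>z'\<in>edge_shift (sc_edges VG EG sG tG LG) sc_src sc_trg. agree m z z' \<longrightarrow>
        Phi EG sG tG LG sH \<phi> \<psi> z' i = Phi EG sG tG LG sH \<phi> \<psi> z i" by blast
  qed
qed

end

lemma Phi_label: "label_map sc_label (Phi E s t L sH \<phi> \<psi> z) = \<psi> (label_map sc_label z)"
  by (simp add: Phi_def label_map_def sc_label_def)

lemma img_set:
  assumes "\<forall>x\<in>P. g (\<phi> x) = x"
  shows "{h (g u) |u. u \<in> \<phi> ` P} = {h x |x. x \<in> P}"
proof
  show "{h (g u) |u. u \<in> \<phi> ` P} \<subseteq> {h x |x. x \<in> P}" using assms by force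
  show "{h x |x. x \<in> P} \<subseteq> {h (g u) |u. u \<in> \<phi> ` P}"
  proof
    fix w assume "w \<in> {h x |x. x \<in> P}"
    then obtain x where "x \<in> P" "w = h x" by blast
    thus "w \<in> {h (g u) |u. u \<in> \<phi> ` P}" using assms by (intro CollectI exI[of _ "\<phi> x"]) simp
  qed
qed

lemma topspace_sub[simp]: "topspace (subtopology full_shift_top X) = X"
  by simp

theorem corollary4p3:
  fixes VG :: "'v set" and EG :: "'e set" and sG tG :: "'e \<Rightarrow> 'v" and LG :: "'e \<Rightarrow> 'a"
    and VH :: "'w set" and EH :: "'f set" and sH tH :: "'f \<Rightarrow> 'w" and LH :: "'f \<Rightarrow> 'a"
    and \<psi> :: "(int \<Rightarrow> 'a) \<Rightarrow> (int \<Rightarrow> 'a)"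
    and \<phi> :: "(int \<Rightarrow> 'e) \<Rightarrow> (int \<Rightarrow> 'f)"
  assumes "fin_graph_no_sink_source VG EG sG tG"
    and "fin_graph_no_sink_source VH EH sH tH"
    and "right_resolving EG sG LG"
    and "right_resolving EH sH LH"
    and "conjugacy (label_map LG ` edge_shift EG sG tG) (label_map LH ` edge_shift EH sH tH) \<psi>"
    and "conjugacy (edge_shift EG sG tG) (edge_shift EH sH tH) \<phi>"
    and "\<forall>x \<in> edge_shift EG sG tG. label_map LH (\<phi> x) = \<psi> (label_map LG x)"
  shows "\<exists>\<phi>''. conjugacy (edge_shift (sc_edges VG EG sG tG LG) sc_src sc_trg)
                          (edge_shift (sc_edges VH EH sH tH LH) sc_src sc_trg) \<phi>'' \<and>
              (\<forall>x \<in> edge_shift (sc_edges VG EG sG tG LG) sc_src sc_trg.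
                 label_map sc_label (\<phi>'' x) = \<psi> (label_map sc_label x))"
proof -
  note gG = assms(1) and gH = assms(2) and rrG = assms(3) and rrH = assms(4) and lab = assms(7)
  obtain g where hg: "homeomorphic_maps (subtopology full_shift_top (edge_shift EG sG tG))
      (subtopology full_shift_top (edge_shift EH sH tH)) \<phi> g"
    and phishift: "\<forall>x\<in>edge_shift EG sG tG. \<phi> (shift x) = shift (\<phi> x)"
    using assms(6) unfolding conjugacy_def homeomorphic_map_maps by blast
  have phic: "continuous_map (subtopology full_shift_top (edge_shift EG sG tG))
      (subtopology full_shift_top (edge_shift EH sH tH)) \<phi>"
    and gc: "continuous_map (subtopology full_shift_top (edge_shift EH sH tH))
      (subtopology full_shift_top (edge_shift EG sG tG)) g"
    and gphi: "\<forall>x\<in>edge_shift EG sG tG. g (\<phi> x) = x"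
    and phig: "\<forall>u\<in>edge_shift EH sH tH. \<phi> (g u) = u"
    using hg unfolding homeomorphic_maps_def by auto
  obtain \<psi>' where hp: "homeomorphic_maps (subtopology full_shift_top (label_map LG ` edge_shift EG sG tG))
      (subtopology full_shift_top (label_map LH ` edge_shift EH sH tH)) \<psi> \<psi>'"
    and psishift: "\<forall>y\<in>label_map LG ` edge_shift EG sG tG. \<psi> (shift y) = shift (\<psi> y)"
    using assms(5) unfolding conjugacy_def homeomorphic_map_maps by blast
  have psic: "continuous_map (subtopology full_shift_top (label_map LG ` edge_shift EG sG tG))
      (subtopology full_shift_top (label_map LH ` edge_shift EH sH tH)) \<psi>"
    and psic': "continuous_map (subtopology full_shift_top (label_map LH ` edge_shift EH sH tH))
      (subtopology full_shift_top (label_map LG ` edge_shift EG sG tG)) \<psi>'"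
    and pp: "\<forall>y\<in>label_map LG ` edge_shift EG sG tG. \<psi>' (\<psi> y) = y"
    and pp': "\<forall>w\<in>label_map LH ` edge_shift EH sH tH. \<psi> (\<psi>' w) = w"
    using hp unfolding homeomorphic_maps_def by auto
  have gin: "g u \<in> edge_shift EG sG tG" if "u \<in> edge_shift EH sH tH" for u
    using gc that unfolding continuous_map_def by auto
  have phiin: "\<phi> x \<in> edge_shift EH sH tH" if "x \<in> edge_shift EG sG tG" for x
    using phic that unfolding continuous_map_def by auto
  have psi'in: "\<psi>' w \<in> label_map LG ` edge_shift EG sG tG" if "w \<in> label_map LH ` edge_shift EH sH tH" for w
    using psic' that unfolding continuous_map_def by auto
  have Yshift: "shift y \<in> label_map LG ` edge_shift EG sG tG" if yY: "y \<in> label_map LG ` edge_shift EG sG tG" for y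
  proof -
    obtain x where "x \<in> edge_shift EG sG tG" "y = label_map LG x" using yY by blast
    thus ?thesis using label_shift shift_edge_shift by (metis image_eqI)
  qed
  have gshift: "\<forall>u\<in>edge_shift EH sH tH. g (shift u) = shift (g u)"
  proof
    fix u assume u: "u \<in> edge_shift EH sH tH"
    define x where "x = g u"
    have x: "x \<in> edge_shift EG sG tG" "\<phi> x = u" using gin[OF u] phig u by (auto simp: x_def)
    have "shift u = \<phi> (shift x)" using phishift x by simp
    hence "g (shift u) = shift x" using gphi shift_edge_shift[OF x(1)] by simp
    thus "g (shift u) = shift (g u)" by (simp add: x_def)
  qed
  have psi'shift: "\<forall>w\<in>label_map LH ` edge_shift EH sH tH. \<psi>' (shift w) = shift (\<psi>' w)"
  proof
    fix w assume w: "w \<in> label_map LH ` edge_shift EH sH tH"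
    define y where "y = \<psi>' w"
    have y: "y \<in> label_map LG ` edge_shift EG sG tG" "\<psi> y = w" using psi'in[OF w] pp' w by (auto simp: y_def)
    have "\<psi> (shift y) = shift (\<psi> y)" using psishift y(1) by blast
    hence "shift w = \<psi> (shift y)" using y(2) by simp
    moreover have "\<psi>' (\<psi> (shift y)) = shift y" using pp Yshift[OF y(1)] by blast
    ultimately have "\<psi>' (shift w) = shift y" by simp
    thus "\<psi>' (shift w) = shift (\<psi>' w)" by (simp add: y_def)
  qed
  have labg: "\<forall>u\<in>edge_shift EH sH tH. label_map LG (g u) = \<psi>' (label_map LH u)"
  proof
    fix u assume u: "u \<in> edge_shift EH sH tH"
    define x where "x = g u"
    have x: "x \<in> edge_shift EG sG tG" "\<phi> x = u" using gin[OF u] phig u by (auto simp: x_def)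
    have "label_map LH u = \<psi> (label_map LG x)" using lab x by auto
    moreover have "\<psi>' (\<psi> (label_map LG x)) = label_map LG x" using pp x(1) by blast
    ultimately have "\<psi>' (label_map LH u) = label_map LG x" by simp
    thus "label_map LG (g u) = \<psi>' (label_map LH u)" by (simp add: x_def)
  qed
  interpret A: xfer VG EG sG tG LG VH EH sH tH LH \<phi> g \<psi>
    by (unfold_locales; fact)
  interpret B: xfer VH EH sH tH LH VG EG sG tG LG g \<phi> \<psi>'
    by (unfold_locales; fact)
  define \<Phi> where "\<Phi> = Phi EG sG tG LG sH \<phi> \<psi>"
  define \<Phi>' where "\<Phi>' = Phi EH sH tH LH sG g \<psi>'"
  have inv1: "\<Phi>' (\<Phi> z) = z" if z: "z \<in> edge_shift (sc_edges VG EG sG tG LG) sc_src sc_trg" for z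
  proof
    fix i
    have Q: "PP EH sH tH LH (\<Phi> z) = \<phi> ` PP EG sG tG LG z" using A.Phi_Q[OF z] by (simp add: \<Phi>_def)
    have gp: "\<forall>x\<in>PP EG sG tG LG z. g (\<phi> x) = x" using gphi A.P_sub by blast
    have L: "\<psi>' (label_map sc_label (\<Phi> z)) = label_map sc_label z"
      using Phi_label pp A.lab_Y[OF z] unfolding \<Phi>_def by metis
    have "\<Phi>' (\<Phi> z) i = ({sG (x i) |x. x \<in> PP EG sG tG LG z}, sc_label (z i),
        {sG (x (i+1)) |x. x \<in> PP EG sG tG LG z})"
      unfolding \<Phi>'_def Phi_def Q L
      using img_set[of "PP EG sG tG LG z" g \<phi> "\<lambda>x. sG (x i)", OF gp]
        img_set[of "PP EG sG tG LG z" g \<phi> "\<lambda>x. sG (x (i+1))", OF gp]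
      by (simp add: label_map_def)
    also have "\<dots> = z i" using recon[OF z] by simp
    finally show "\<Phi>' (\<Phi> z) i = z i" .
  qed
  have inv2: "\<Phi> (\<Phi>' w) = w" if w: "w \<in> edge_shift (sc_edges VH EH sH tH LH) sc_src sc_trg" for w
  proof
    fix i
    have Q: "PP EG sG tG LG (\<Phi>' w) = g ` PP EH sH tH LH w" using B.Phi_Q[OF w] by (simp add: \<Phi>'_def)
    have gp: "\<forall>x\<in>PP EH sH tH LH w. \<phi> (g x) = x" using phig B.P_sub by blast
    have L: "\<psi> (label_map sc_label (\<Phi>' w)) = label_map sc_label w"
      using Phi_label pp' B.lab_Y[OF w] unfolding \<Phi>'_def by metis
    have "\<Phi> (\<Phi>' w) i = ({sH (x i) |x. x \<in> PP EH sH tH LH w}, sc_label (w i),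
        {sH (x (i+1)) |x. x \<in> PP EH sH tH LH w})"
      unfolding \<Phi>_def Phi_def Q L
      using img_set[of "PP EH sH tH LH w" \<phi> g "\<lambda>x. sH (x i)", OF gp]
        img_set[of "PP EH sH tH LH w" \<phi> g "\<lambda>x. sH (x (i+1))", OF gp]
      by (simp add: label_map_def)
    also have "\<dots> = w i" using recon[OF w] by simp
    finally show "\<Phi> (\<Phi>' w) i = w i" .
  qed
  have "homeomorphic_maps (subtopology full_shift_top (edge_shift (sc_edges VG EG sG tG LG) sc_src sc_trg))
      (subtopology full_shift_top (edge_shift (sc_edges VH EH sH tH LH) sc_src sc_trg)) \<Phi> \<Phi>'"
    unfolding homeomorphic_maps_def \<Phi>_def[symmetric] \<Phi>'_def[symmetric]
    using A.Phi_cont B.Phi_cont inv1 inv2 unfolding \<Phi>_def \<Phi>'_def by auto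
  hence "conjugacy (edge_shift (sc_edges VG EG sG tG LG) sc_src sc_trg)
      (edge_shift (sc_edges VH EH sH tH LH) sc_src sc_trg) \<Phi>"
    unfolding conjugacy_def homeomorphic_map_maps using A.Phi_shift unfolding \<Phi>_def by blast
  moreover have "\<forall>x \<in> edge_shift (sc_edges VG EG sG tG LG) sc_src sc_trg.
                 label_map sc_label (\<Phi> x) = \<psi> (label_map sc_label x)"
    unfolding \<Phi>_def using Phi_label by blast
  ultimately show ?thesis by blast
qed


end
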